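(* Fix $N\ge1$, let $\mathbf{F}$ be any one of $\mathbf{F}^{\rm Midpt},\mathbf{F}^{\rm Mass},\mathbf{F}^{\rm Eng}$ (defined in the context), and let $\mathbf{b}(t)$ be the solution of the toy model system with initial condition $\mathbf{b}(0)\in\mathbb{C}^N$. Then there is a constant $C$ depending only on $\|\mathbf{b}(0)\|_2$ such that, for a time step $\Delta t>0$ and $t_n=n\Delta t$, the local truncation error satisfies $$\|\mathbf{b}(t_{n+1})-\mathbf{b}(t_n)-\Delta t\,\mathbf{F}(\mathbf{b}(t_n),\mathbf{b}(t_{n+1}))\|\le C\,\Delta t^3 .$$
   Context: The toy model system is $-i\dot b_j=-|b_j|^2b_j+2b_{j-1}^2\bar b_j+2b_{j+1}^2\bar b_j$, $j=1,\dots,N$, with $b_0(t)=b_{N+1}(t)=0$. $\|\cdot\|=\|\cdot\|_2$ is the Euclidean norm on $\mathbb{C}^N$. For $\mathbf{u},\mathbf{v}\in\mathbb{C}^N$ set $u_0=u_{N+1}=v_0=v_{N+1}=0$, $m_j=\tfrac12(u_j+v_j)$, $a_j=\tfrac12(|u_j|^2+|v_j|^2)$, $q_j=\tfrac12(u_j^2+v_j^2)$, and for $j=1,\dots,N$: $F^{\rm Midpt}_j(\mathbf{u},\mathbf{v})=-i|m_j|^2m_j+2i\,\bar m_j(m_{j-1}^2+m_{j+1}^2)$; $F^{\rm Mass}_j(\mathbf{u},\mathbf{v})=-i\,a_jm_j+2i\,\bar m_j(m_{j+1}^2+m_{j-1}^2)$; $F^{\rm Eng}_j(\mathbf{u},\mathbf{v})=-i\,a_jm_j+2i\,\bar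 m_j(q_{j+1}+q_{j-1})$. The corresponding numerical schemes are $\mathbf{b}_{n+1}=\mathbf{b}_n+\Delta t\,\mathbf{F}(\mathbf{b}_n,\mathbf{b}_{n+1})$. *)

theory Defs
  imports "HOL-Analysis.Analysis"
begin

text \<open>Vectors in C^N are represented as functions nat => complex, with the
  relevant components indexed 1..N. The helper ext extends a vector by zero
  outside 1..N (so that u_0 = u_{N+1} = 0).\<close>

definition ext :: "nat \<Rightarrow> (nat \<Rightarrow> complex) \<Rightarrow> nat \<Rightarrow> complex" where
  "ext N u j = (if 1 \<le> j \<and> j \<le> N then u j else 0)"

definition vnorm :: "nat \<Rightarrow> (nat \<Rightarrow> complex) \<Rightarrow> real" where
  "vnorm N u = sqrt (\<Sum>j=1..N. (cmod (u j))\<^sup>2)"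

text \<open>Right-hand side of the toy model written as  d/dt b_j = i * (...),
  since  -i b_j' = R_j  is equivalent to  b_j' = i R_j.\<close>
definition toy_rhs :: "nat \<Rightarrow> (nat \<Rightarrow> complex) \<Rightarrow> nat \<Rightarrow> complex" where
  "toy_rhs N b j = (let c = ext N b in
      \<i> * (- ((cmod (c j))\<^sup>2) * c j + 2 * (c (j - 1))\<^sup>2 * cnj (c j)
            + 2 * (c (j + 1))\<^sup>2 * cnj (c j)))"

definition m_av :: "nat \<Rightarrow> (nat \<Rightarrow> complex) \<Rightarrow> (nat \<Rightarrow> complex) \<Rightarrow> nat \<Rightarrow> complex" where
  "m_av N u v j = (ext N u j + ext N v j) / 2"

definition a_av :: "nat \<Rightarrow> (nat \<Rightarrow> complex) \<Rightarrow> (nat \<Rightarrow> complex) \<Rightarrow> nat \<Rightarrow> complex" where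
  "a_av N u v j = complex_of_real (((cmod (ext N u j))\<^sup>2 + (cmod (ext N v j))\<^sup>2) / 2)"

definition q_av :: "nat \<Rightarrow> (nat \<Rightarrow> complex) \<Rightarrow> (nat \<Rightarrow> complex) \<Rightarrow> nat \<Rightarrow> complex" where
  "q_av N u v j = ((ext N u j)\<^sup>2 + (ext N v j)\<^sup>2) / 2"

definition F_Midpt :: "nat \<Rightarrow> (nat \<Rightarrow> complex) \<Rightarrow> (nat \<Rightarrow> complex) \<Rightarrow> nat \<Rightarrow> complex" where
  "F_Midpt N u v j = (let m = m_av N u v in
      - \<i> * complex_of_real ((cmod (m j))\<^sup>2) * m j
      + 2 * \<i> * cnj (m j) * ((m (j - 1))\<^sup>2 + (m (j + 1))\<^sup>2))"

definition F_Mass :: "nat \<Rightarrow> (nat \<Rightarrow> complex) \<Rightarrow> (nat \<Rightarrow> complex) \<Rightarrow> nat \<Rightarrow> complex" where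
  "F_Mass N u v j = (let m = m_av N u v in
      - \<i> * a_av N u v j * m j
      + 2 * \<i> * cnj (m j) * ((m (j + 1))\<^sup>2 + (m (j - 1))\<^sup>2))"

definition F_Eng :: "nat \<Rightarrow> (nat \<Rightarrow> complex) \<Rightarrow> (nat \<Rightarrow> complex) \<Rightarrow> nat \<Rightarrow> complex" where
  "F_Eng N u v j = (let m = m_av N u v; q = q_av N u v in
      - \<i> * a_av N u v j * m j
      + 2 * \<i> * cnj (m j) * (q (j + 1) + q (j - 1)))"

text \<open>b is a solution of the toy model on [0,inf) in C^N (components outside
  1..N are identically zero, encoding b_0 = b_{N+1} = 0).\<close>
definition is_toy_solution :: "nat \<Rightarrow> (real \<Rightarrow> nat \<Rightarrow> complex) \<Rightarrow> bool" where
  "is_toy_solution N b \<longleftrightarrow>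
     (\<forall>t \<ge> 0. \<forall>j. \<not> (1 \<le> j \<and> j \<le> N) \<longrightarrow> b t j = 0) \<and>
     (\<forall>t \<ge> 0. \<forall>j \<in> {1..N}.
        ((\<lambda>s. b s j) has_vector_derivative toy_rhs N (b t) j) (at t within {0..}))"

end

theory Submission
  imports Defs
begin


lemma prod3_le:
  fixes x y z X Y Z :: real
  assumes "0 \<le> x" "x \<le> X" "0 \<le> y" "y \<le> Y" "0 \<le> z" "z \<le> Z"
  shows "x * y * z \<le> X * Y * Z"
  using assms by (meson mult_mono order_trans mult_nonneg_nonneg)

lemma ML1:
  fixes x y z a b c :: complex and Ax Ay Az B \<tau> :: real
  assumes "norm x \<le> Ax" "norm y \<le> Ay" "norm z \<le> Az"
    and "norm a \<le> \<tau> * B * Ax" "norm b \<le> \<tau> * B * Ay" "norm c \<le> \<tau> * B * Az"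
    and "0 \<le> \<tau>" "\<tau> \<le> 1" "1 \<le> B"
  shows "norm ((x + a) * (y + b) * (z + c) - x * y * z) \<le> 7 * B^3 * \<tau> * (Ax * Ay * Az)"
proof -
  have A: "0 \<le> Ax" "0 \<le> Ay" "0 \<le> Az" using assms norm_ge_zero order_trans by blast+
  have e: "(x + a) * (y + b) * (z + c) - x * y * z = a*y*z + x*b*z + x*y*c + a*b*z + a*y*c + x*b*c + a*b*c"
    by (simp add: algebra_simps)
  have "norm ((x + a) * (y + b) * (z + c) - x * y * z) \<le>
     norm a*norm y*norm z + norm x*norm b*norm z + norm x*norm y*norm c + norm a*norm b*norm z
     + norm a*norm y*norm c + norm x*norm b*norm c + norm a*norm b*norm c"
    unfolding e by (intro order_trans[OF norm_triangle_ineq] add_mono order_refl; simp add: norm_mult)+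
  also have "\<dots> \<le> (\<tau>*B*Ax)*Ay*Az + Ax*(\<tau>*B*Ay)*Az + Ax*Ay*(\<tau>*B*Az) + (\<tau>*B*Ax)*(\<tau>*B*Ay)*Az
     + (\<tau>*B*Ax)*Ay*(\<tau>*B*Az) + Ax*(\<tau>*B*Ay)*(\<tau>*B*Az) + (\<tau>*B*Ax)*(\<tau>*B*Ay)*(\<tau>*B*Az)"
    by (intro add_mono prod3_le; simp add: assms)
  also have "\<dots> = (3*B + 3*B^2*\<tau> + B^3*\<tau>^2) * \<tau> * (Ax*Ay*Az)"
    by (simp add: algebra_simps power2_eq_square power3_eq_cube)
  also have "\<dots> \<le> 7 * B^3 * \<tau> * (Ax * Ay * Az)"
  proof -
    have "B \<le> B^3" using assms(9) by (simp add: power3_eq_cube) (metis mult_le_cancel_left1 mult_right_mono one_le_mult_iff order.trans less_le_not_le linorder_not_le zero_le_one)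
    moreover have "B^2 * \<tau> \<le> B^3" using assms(7,8,9)
      by (metis mult.commute mult_left_le power_increasing_iff power_mono zero_le_numeral order.trans le_numeral_extra(1) numeral_le_iff semiring_norm(72) zero_le_power nat_le_linear one_le_numeral power_increasing)
    moreover have "B^3 * \<tau>^2 \<le> B^3" using assms(7,8,9)
      by (simp add: mult_left_le power_le_one)
    ultimately have "3*B + 3*B^2*\<tau> + B^3*\<tau>^2 \<le> 7*B^3" by linarith
    thus ?thesis using A assms(7) by (intro mult_right_mono) (auto intro: mult_nonneg_nonneg)
  qed
  finally show ?thesis .
qed

lemma ML2:
  fixes x y z a1 b1 c1 a2 b2 c2 :: complex and Ax Ay Az B \<tau> :: real
  assumes "norm x \<le> Ax" "norm y \<le> Ay" "norm z \<le> Az"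
    and "norm a1 \<le> \<tau> * B * Ax" "norm b1 \<le> \<tau> * B * Ay" "norm c1 \<le> \<tau> * B * Az"
    and "norm a2 \<le> \<tau> * B * Ax" "norm b2 \<le> \<tau> * B * Ay" "norm c2 \<le> \<tau> * B * Az"
    and "norm (a1+a2) \<le> \<tau>^2 * B * Ax" "norm (b1+b2) \<le> \<tau>^2 * B * Ay" "norm (c1+c2) \<le> \<tau>^2 * B * Az"
    and "0 \<le> \<tau>" "\<tau> \<le> 1" "1 \<le> B"
  shows "norm ((x + a1) * (y + b1) * (z + c1) + (x + a2) * (y + b2) * (z + c2) - 2 * (x * y * z))
     \<le> 11 * B^3 * \<tau>^2 * (Ax * Ay * Az)"
proof -
  have A: "0 \<le> Ax" "0 \<le> Ay" "0 \<le> Az" using assms norm_ge_zero order_trans by blast+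
  have e: "(x + a1) * (y + b1) * (z + c1) + (x + a2) * (y + b2) * (z + c2) - 2 * (x * y * z)
     = (a1+a2)*y*z + x*(b1+b2)*z + x*y*(c1+c2) + a1*b1*z + a1*y*c1 + x*b1*c1
       + a2*b2*z + a2*y*c2 + x*b2*c2 + a1*b1*c1 + a2*b2*c2"
    by (simp add: algebra_simps)
  have "norm ((x + a1) * (y + b1) * (z + c1) + (x + a2) * (y + b2) * (z + c2) - 2 * (x * y * z)) \<le>
     norm (a1+a2)*norm y*norm z + norm x*norm (b1+b2)*norm z + norm x*norm y*norm (c1+c2)
     + norm a1*norm b1*norm z + norm a1*norm y*norm c1 + norm x*norm b1*norm c1
     + norm a2*norm b2*norm z + norm a2*norm y*norm c2 + norm x*norm b2*norm c2
     + norm a1*norm b1*norm c1 + norm a2*norm b2*norm c2"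
    unfolding e by (intro order_trans[OF norm_triangle_ineq] add_mono order_refl; simp add: norm_mult)+
  also have "\<dots> \<le> (\<tau>^2*B*Ax)*Ay*Az + Ax*(\<tau>^2*B*Ay)*Az + Ax*Ay*(\<tau>^2*B*Az)
     + (\<tau>*B*Ax)*(\<tau>*B*Ay)*Az + (\<tau>*B*Ax)*Ay*(\<tau>*B*Az) + Ax*(\<tau>*B*Ay)*(\<tau>*B*Az)
     + (\<tau>*B*Ax)*(\<tau>*B*Ay)*Az + (\<tau>*B*Ax)*Ay*(\<tau>*B*Az) + Ax*(\<tau>*B*Ay)*(\<tau>*B*Az)
     + (\<tau>*B*Ax)*(\<tau>*B*Ay)*(\<tau>*B*Az) + (\<tau>*B*Ax)*(\<tau>*B*Ay)*(\<tau>*B*Az)"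
    by (intro add_mono prod3_le; simp add: assms)
  also have "\<dots> = (3*B + 6*B^2 + 2*B^3*\<tau>) * \<tau>^2 * (Ax*Ay*Az)"
    by (simp add: algebra_simps power2_eq_square power3_eq_cube)
  also have "\<dots> \<le> 11 * B^3 * \<tau>^2 * (Ax * Ay * Az)"
  proof -
    have B1: "B \<le> B^2" "B^2 \<le> B^3" using assms(15)
      by (simp_all add: power2_eq_square power3_eq_cube)
    have "B \<le> B^3" using B1 by linarith
    moreover have "B^3 * \<tau> \<le> B^3" using assms(13,14,15)
      by (simp add: mult_left_le)
    ultimately have "3*B + 6*B^2 + 2*B^3*\<tau> \<le> 11*B^3" using B1 by linarith
    thus ?thesis using A assms(13) by (intro mult_right_mono) (auto intro: mult_nonneg_nonneg)
  qed
  finally show ?thesis .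
qed

lemma tri3: "norm (- X + 2*Y + 2*Z) \<le> norm X + 2*norm Y + 2*norm (Z::complex)"
proof -
  have "norm (- X + 2*Y + 2*Z) \<le> norm (-X) + norm (2*Y) + norm (2*Z)"
    by (meson add_mono norm_triangle_ineq order_trans order_refl)
  thus ?thesis by (simp add: norm_mult)
qed

definition fR :: "complex \<Rightarrow> complex \<Rightarrow> complex \<Rightarrow> complex" where
  "fR p c n = -(c*c*cnj c) + 2*(p*p*cnj c) + 2*(n*n*cnj c)"

lemma FR1:
  fixes p c n dp dc dn :: complex and Ap Ac An B \<tau> D :: real
  assumes "norm p \<le> Ap" "norm c \<le> Ac" "norm n \<le> An"
    and "norm dp \<le> \<tau> * B * Ap" "norm dc \<le> \<tau> * B * Ac" "norm dn \<le> \<tau> * B * An"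
    and "0 \<le> \<tau>" "\<tau> \<le> 1" "1 \<le> B" "Ap \<le> D" "Ac \<le> D" "An \<le> D"
  shows "norm (fR (p+dp) (c+dc) (n+dn) - fR p c n) \<le> 35 * B^3 * D^2 * \<tau> * Ac"
proof -
  have A: "0 \<le> Ap" "0 \<le> Ac" "0 \<le> An" using assms norm_ge_zero order_trans by blast+
  have e: "fR (p+dp) (c+dc) (n+dn) - fR p c n =
     - ((c+dc)*(c+dc)*(cnj c + cnj dc) - c*c*cnj c) + 2*((p+dp)*(p+dp)*(cnj c + cnj dc) - p*p*cnj c)
     + 2*((n+dn)*(n+dn)*(cnj c + cnj dc) - n*n*cnj c)"
    by (simp add: fR_def algebra_simps)
  have t1: "norm ((c+dc)*(c+dc)*(cnj c + cnj dc) - c*c*cnj c) \<le> 7 * B^3 * \<tau> * (Ac*Ac*Ac)"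
    by (rule ML1) (use assms in auto)
  have t2: "norm ((p+dp)*(p+dp)*(cnj c + cnj dc) - p*p*cnj c) \<le> 7 * B^3 * \<tau> * (Ap*Ap*Ac)"
    by (rule ML1) (use assms in auto)
  have t3: "norm ((n+dn)*(n+dn)*(cnj c + cnj dc) - n*n*cnj c) \<le> 7 * B^3 * \<tau> * (An*An*Ac)"
    by (rule ML1) (use assms in auto)
  have "norm (fR (p+dp) (c+dc) (n+dn) - fR p c n) \<le> 7 * B^3 * \<tau> * (Ac*Ac*Ac) + 2*(7 * B^3 * \<tau> * (Ap*Ap*Ac))
      + 2*(7 * B^3 * \<tau> * (An*An*Ac))"
    unfolding e using t1 t2 t3 by (intro order_trans[OF tri3]) linarith
  also have "\<dots> = 7 * B^3 * \<tau> * Ac * (Ac*Ac + 2*(Ap*Ap) + 2*(An*An))" by (simp add: algebra_simps)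
  also have "\<dots> \<le> 7 * B^3 * \<tau> * Ac * (5 * D^2)"
  proof -
    have "Ac*Ac \<le> D^2" "Ap*Ap \<le> D^2" "An*An \<le> D^2" using A assms(10-12)
      by (simp_all add: power2_eq_square mult_mono)
    hence "Ac*Ac + 2*(Ap*Ap) + 2*(An*An) \<le> 5*D^2" by linarith
    moreover have "0 \<le> 7 * B^3 * \<tau> * Ac" using A assms(7,9) by simp
    ultimately show ?thesis by (rule mult_left_mono)
  qed
  finally show ?thesis by (simp add: algebra_simps)
qed

lemma FR2:
  fixes p c n dp1 dc1 dn1 dp2 dc2 dn2 :: complex and Ap Ac An B \<tau> D :: real
  assumes "norm p \<le> Ap" "norm c \<le> Ac" "norm n \<le> An"
    and "norm dp1 \<le> \<tau> * B * Ap" "norm dc1 \<le> \<tau> * B * Ac" "norm dn1 \<le> \<tau> * B * An"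
    and "norm dp2 \<le> \<tau> * B * Ap" "norm dc2 \<le> \<tau> * B * Ac" "norm dn2 \<le> \<tau> * B * An"
    and "norm (dp1+dp2) \<le> \<tau>^2 * B * Ap" "norm (dc1+dc2) \<le> \<tau>^2 * B * Ac" "norm (dn1+dn2) \<le> \<tau>^2 * B * An"
    and "0 \<le> \<tau>" "\<tau> \<le> 1" "1 \<le> B" "Ap \<le> D" "Ac \<le> D" "An \<le> D"
  shows "norm (fR (p+dp1) (c+dc1) (n+dn1) + fR (p+dp2) (c+dc2) (n+dn2) - 2 * fR p c n)
          \<le> 55 * B^3 * D^2 * \<tau>^2 * Ac"
proof -
  have A: "0 \<le> Ap" "0 \<le> Ac" "0 \<le> An" using assms norm_ge_zero order_trans by blast+
  have cc: "norm (cnj dc1 + cnj dc2) \<le> \<tau>^2 * B * Ac"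
    by (metis assms(11) complex_cnj_add complex_mod_cnj)
  have e: "fR (p+dp1) (c+dc1) (n+dn1) + fR (p+dp2) (c+dc2) (n+dn2) - 2 * fR p c n =
     - ((c+dc1)*(c+dc1)*(cnj c + cnj dc1) + (c+dc2)*(c+dc2)*(cnj c + cnj dc2) - 2*(c*c*cnj c))
     + 2*((p+dp1)*(p+dp1)*(cnj c + cnj dc1) + (p+dp2)*(p+dp2)*(cnj c + cnj dc2) - 2*(p*p*cnj c))
     + 2*((n+dn1)*(n+dn1)*(cnj c + cnj dc1) + (n+dn2)*(n+dn2)*(cnj c + cnj dc2) - 2*(n*n*cnj c))"
    by (simp add: fR_def algebra_simps)
  have t1: "norm ((c+dc1)*(c+dc1)*(cnj c + cnj dc1) + (c+dc2)*(c+dc2)*(cnj c + cnj dc2) - 2*(c*c*cnj c))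
      \<le> 11 * B^3 * \<tau>^2 * (Ac*Ac*Ac)"
    by (rule ML2) (use assms cc in auto)
  have t2: "norm ((p+dp1)*(p+dp1)*(cnj c + cnj dc1) + (p+dp2)*(p+dp2)*(cnj c + cnj dc2) - 2*(p*p*cnj c))
      \<le> 11 * B^3 * \<tau>^2 * (Ap*Ap*Ac)"
    by (rule ML2) (use assms cc in auto)
  have t3: "norm ((n+dn1)*(n+dn1)*(cnj c + cnj dc1) + (n+dn2)*(n+dn2)*(cnj c + cnj dc2) - 2*(n*n*cnj c))
      \<le> 11 * B^3 * \<tau>^2 * (An*An*Ac)"
    by (rule ML2) (use assms cc in auto)
  have "norm (fR (p+dp1) (c+dc1) (n+dn1) + fR (p+dp2) (c+dc2) (n+dn2) - 2 * fR p c n)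
     \<le> 11 * B^3 * \<tau>^2 * (Ac*Ac*Ac) + 2*(11 * B^3 * \<tau>^2 * (Ap*Ap*Ac)) + 2*(11 * B^3 * \<tau>^2 * (An*An*Ac))"
    unfolding e using t1 t2 t3 by (intro order_trans[OF tri3]) linarith
  also have "\<dots> = 11 * B^3 * \<tau>^2 * Ac * (Ac*Ac + 2*(Ap*Ap) + 2*(An*An))" by (simp add: algebra_simps)
  also have "\<dots> \<le> 11 * B^3 * \<tau>^2 * Ac * (5 * D^2)"
  proof -
    have "Ac*Ac \<le> D^2" "Ap*Ap \<le> D^2" "An*An \<le> D^2" using A assms(16-18)
      by (simp_all add: power2_eq_square mult_mono)
    hence "Ac*Ac + 2*(Ap*Ap) + 2*(An*An) \<le> 5*D^2" by linarith
    moreover have "0 \<le> 11 * B^3 * \<tau>^2 * Ac" using A assms(13,15) by simp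
    ultimately show ?thesis by (rule mult_left_mono)
  qed
  finally show ?thesis by (simp add: algebra_simps)
qed




lemma cmod_sq_complex: "(complex_of_real (cmod z))^2 = z * cnj z"
  by (metis complex_norm_square of_real_power)

lemma cmod_sq_complex': "complex_of_real (cmod z) * complex_of_real (cmod z) = z * cnj z"
  by (metis cmod_sq_complex power2_eq_square)

locale toy =
  fixes N :: nat and b :: "real \<Rightarrow> nat \<Rightarrow> complex"
  assumes sol: "is_toy_solution N b"
begin

definition g :: "real \<Rightarrow> nat \<Rightarrow> complex" where
  "g s k = \<i> * fR (b s (k-1)) (b s k) (b s (k+1))"

definition M :: real where "M = vnorm N (b 0)"

lemma zero: "0 \<le> s \<Longrightarrow> \<not> (1 \<le> k \<and> k \<le> N) \<Longrightarrow> b s k = 0"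
  using sol unfolding is_toy_solution_def by blast

lemma ext_eq: "0 \<le> s \<Longrightarrow> ext N (b s) = b s"
  using zero by (auto simp: ext_def fun_eq_iff)

lemma deriv: "0 \<le> s \<Longrightarrow> k \<in> {1..N} \<Longrightarrow>
   ((\<lambda>s. b s k) has_vector_derivative g s k) (at s within {0..})"
proof -
  assume s: "0 \<le> s" and k: "k \<in> {1..N}"
  have "toy_rhs N (b s) k = g s k"
    unfolding toy_rhs_def ext_eq[OF s] g_def fR_def Let_def
    by (simp add: cmod_sq_complex' algebra_simps power2_eq_square)
  moreover have "((\<lambda>s. b s k) has_vector_derivative toy_rhs N (b s) k) (at s within {0..})"
    using sol s k unfolding is_toy_solution_def by blast
  ultimately show ?thesis by simp
qed

lemma mass_identity:
  fixes w :: "nat \<Rightarrow> complex" and x :: "nat \<Rightarrow> complex"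
  defines "w \<equiv> \<lambda>k. (x (k-1))^2 * (cnj (x k))^2 - (cnj (x (k-1)))^2 * (x k)^2"
  assumes "k \<ge> 1"
  shows "x k * cnj (\<i> * fR (x (k-1)) (x k) (x (k+1))) + \<i> * fR (x (k-1)) (x k) (x (k+1)) * cnj (x k)
     = 2 * \<i> * (w k - w (Suc k))"
  using assms(2) unfolding w_def fR_def
  by (simp add: algebra_simps power2_eq_square)

lemma mass: "0 \<le> s \<Longrightarrow> (\<Sum>k=1..N. (cmod (b s k))^2) = M^2"
proof -
  assume s: "0 \<le> s"
  define P where "P t = (\<Sum>k\<in>{1..N}. b t k * cnj (b t k))" for t
  define w where "w t k = (b t (k-1))^2 * (cnj (b t k))^2 - (cnj (b t (k-1)))^2 * (b t k)^2" for t k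
  have dP: "(P has_vector_derivative 0) (at t within {0..})" if t: "t \<in> {0..}" for t
  proof -
    have "(P has_vector_derivative (\<Sum>k\<in>{1..N}. b t k * cnj (g t k) + g t k * cnj (b t k))) (at t within {0..})"
      unfolding P_def using t
      by (intro derivative_eq_intros) (auto intro!: deriv)
    moreover have "(\<Sum>k\<in>{1..N}. b t k * cnj (g t k) + g t k * cnj (b t k)) = 0"
    proof -
      have "(\<Sum>k\<in>{1..N}. b t k * cnj (g t k) + g t k * cnj (b t k)) = (\<Sum>k=1..N. 2 * \<i> * (w t k - w t (Suc k)))"
        unfolding g_def w_def by (intro sum.cong refl mass_identity) auto
      also have "\<dots> = - 2 * \<i> * (\<Sum>k=1..N. w t (Suc k) - w t k)"
        by (simp add: sum_distrib_left algebra_simps sum_negf[symmetric])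
      also have "\<dots> = - 2 * \<i> * (w t (Suc N) - w t 1)"
        by (subst sum_Suc_diff) auto
      also have "\<dots> = 0" using t zero[of t 0] zero[of t "Suc N"] by (simp add: w_def)
      finally show ?thesis .
    qed
    ultimately show ?thesis by simp
  qed
  obtain c where "\<And>t. t \<in> {0..} \<Longrightarrow> P t = c"
    using has_vector_derivative_zero_constant[of "{0..}" P] dP by (auto simp: convex_real_interval)
  hence "P s = P 0" using s by auto
  hence "complex_of_real (\<Sum>k=1..N. (cmod (b s k))^2) = of_real (\<Sum>k=1..N. (cmod (b 0 k))^2)"
    unfolding P_def by (simp add: cmod_sq_complex)
  hence "(\<Sum>k=1..N. (cmod (b s k))^2) = (\<Sum>k=1..N. (cmod (b 0 k))^2)" using of_real_eq_iff by blast
  also have "\<dots> = M^2"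
    unfolding M_def vnorm_def by (rule real_sqrt_pow2[symmetric]) (metis (no_types, lifting) sum_nonneg zero_le_power2)
  finally show ?thesis .
qed

lemma M_nonneg: "0 \<le> M" unfolding M_def vnorm_def
  by (rule real_sqrt_ge_zero) (metis (no_types, lifting) sum_nonneg zero_le_power2)

lemma bound: "0 \<le> s \<Longrightarrow> cmod (b s k) \<le> M"
proof (cases "1 \<le> k \<and> k \<le> N")
  case True
  assume s: "0 \<le> s"
  have "(cmod (b s k))^2 \<le> (\<Sum>k=1..N. (cmod (b s k))^2)"
    using True by (intro member_le_sum) auto
  hence "(cmod (b s k))^2 \<le> M^2" using mass[OF s] by simp
  thus ?thesis using M_nonneg by (simp add: abs_le_square_iff power2_le_iff_abs_le)
next
  case False
  assume "0 \<le> s" thus ?thesis using zero False M_nonneg by simp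
qed

end



lemma MVT_bound:
  fixes f :: "real \<Rightarrow> complex"
  assumes "a \<le> c"
    and d: "\<And>x. x \<in> {a..c} \<Longrightarrow> (f has_vector_derivative f' x) (at x within {a..c})"
    and K: "\<And>x. x \<in> {a..c} \<Longrightarrow> norm (f' x) \<le> K"
  shows "norm (f c - f a) \<le> 3 * K * (c - a)"
proof -
  have "norm (f c - f a - (c - a) *\<^sub>R f' a) \<le> norm (c - a) * (2*K)"
  proof (rule vector_differentiable_bound_linearization[OF d])
    show "closed_segment a c \<subseteq> {a..c}" using assms(1) by (simp add: closed_segment_eq_real_ivl)
    fix x assume "x \<in> {a..c}"
    hence "norm (f' x - f' a) \<le> norm (f' x) + norm (f' a)" by (simp add: norm_triangle_ineq4)
    also have "\<dots> \<le> 2*K" using K \<open>x \<in> {a..c}\<close> assms(1) K[of a] by fastforce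
    finally show "norm (f' x - f' a) \<le> 2*K" .
  qed (use assms(1) in auto)
  moreover have "norm ((c - a) *\<^sub>R f' a) \<le> (c - a) * K" using K[of a] assms(1)
    by (simp add: mult_left_mono)
  moreover have "norm (f c - f a) \<le> norm ((c - a) *\<^sub>R f' a) + norm (f c - f a - (c - a) *\<^sub>R f' a)"
    by (rule norm_triangle_sub)
  ultimately have "norm (f c - f a) \<le> norm (c-a) * (2*K) + (c-a)*K" by linarith
  thus ?thesis using assms(1) by (simp add: algebra_simps)
qed

lemma fR_bound:
  assumes "norm p \<le> m" "norm c \<le> m" "norm n \<le> m"
  shows "norm (fR p c n) \<le> 5 * m^2 * norm c"
proof -
  have "norm (fR p c n) \<le> norm c * norm c * norm c + 2 * (norm p * norm p * norm c) + 2 * (norm n * norm n * norm c)"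
    unfolding fR_def using tri3[of "c*c*cnj c" "p*p*cnj c" "n*n*cnj c"] by (simp add: norm_mult)
  also have "\<dots> = norm c * (norm c * norm c + 2*(norm p * norm p) + 2*(norm n * norm n))" by (simp add: algebra_simps)
  also have "\<dots> \<le> norm c * (5 * m^2)"
  proof (rule mult_left_mono)
    have "norm c * norm c \<le> m^2" "norm p * norm p \<le> m^2" "norm n * norm n \<le> m^2"
      using assms by (simp_all add: power2_eq_square mult_mono')
    thus "norm c * norm c + 2*(norm p * norm p) + 2*(norm n * norm n) \<le> 5 * m^2" by linarith
  qed simp
  finally show ?thesis by (simp add: algebra_simps)
qed

definition Lamf :: "real \<Rightarrow> real" where "Lamf m = 15 * m^2"
definition Df :: "real \<Rightarrow> real" where "Df m = 2 * (m::real)"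
definition B1f :: "real \<Rightarrow> real" where "B1f m = max 1 (Lamf m)"
definition Lf :: "real \<Rightarrow> real" where "Lf m = 35 * (B1f m)^3 * (Df m)^2"
definition Bf :: "real \<Rightarrow> real" where "Bf m = max (B1f m) (2 * Lf m)"
definition Cf :: "real \<Rightarrow> real" where "Cf m = 88 * (Bf m)^3 * (Df m)^2 * m + 16 * m * (Bf m)^3 + 40 * m^3 * (Bf m)^2"

context toy begin

lemma gnorm: "0 \<le> s \<Longrightarrow> cmod (b s k) \<le> A \<Longrightarrow> cmod (g s k) \<le> 5 * M^2 * A"
proof -
  assume s: "0 \<le> s" and A: "cmod (b s k) \<le> A"
  have "cmod (g s k) = norm (fR (b s (k-1)) (b s k) (b s (k+1)))" unfolding g_def by (simp add: norm_mult)
  also have "\<dots> \<le> 5 * M^2 * cmod (b s k)" by (rule fR_bound) (use bound s in auto)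
  also have "\<dots> \<le> 5 * M^2 * A" using A by (simp add: mult_left_mono)
  finally show ?thesis .
qed

lemma cont: "0 \<le> t0 \<Longrightarrow> continuous_on {t0..t1} (\<lambda>s. b s k)"
proof (cases "k \<in> {1..N}")
  case True
  assume t0: "0 \<le> t0"
  show ?thesis unfolding continuous_on_eq_continuous_within
  proof
    fix x assume x: "x \<in> {t0..t1}"
    have "continuous (at x within {0..}) (\<lambda>s. b s k)"
      using deriv[of x k] True x t0 has_vector_derivative_continuous by auto
    thus "continuous (at x within {t0..t1}) (\<lambda>s. b s k)"
      by (rule continuous_within_subset) (use t0 in auto)
  qed
next
  case False
  assume t0: "0 \<le> t0"
  have "continuous_on {t0..t1} (\<lambda>s. 0::complex)" by simp
  thus ?thesis by (rule continuous_on_cong[THEN iffD1, rotated 2]) (use zero False t0 in auto)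
qed

lemma incr:
  assumes s1: "0 \<le> s1" and s12: "s1 \<le> s2" and A: "\<And>\<sigma>. \<sigma> \<in> {s1..s2} \<Longrightarrow> cmod (b \<sigma> k) \<le> A"
  shows "cmod (b s2 k - b s1 k) \<le> Lamf M * A * (s2 - s1)"
proof (cases "k \<in> {1..N}")
  case True
  have "cmod (b s2 k - b s1 k) \<le> 3 * (5 * M^2 * A) * (s2 - s1)"
  proof (rule MVT_bound[where f'="\<lambda>s. g s k"])
    show "s1 \<le> s2" by (rule s12)
    fix x assume x: "x \<in> {s1..s2}"
    have x0: "0 \<le> x" using x s1 by simp
    have "{s1..s2} \<subseteq> {0..}" using s1 by auto
    thus "((\<lambda>s. b s k) has_vector_derivative g x k) (at x within {s1..s2})"
      by (rule has_vector_derivative_within_subset[OF deriv[OF x0 True]])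
    show "cmod (g x k) \<le> 5 * M^2 * A" by (rule gnorm[OF x0 A[OF x]])
  qed
  moreover have "3 * (5 * M^2 * A) * (s2 - s1) = Lamf M * A * (s2 - s1)" by (simp add: Lamf_def)
  ultimately show ?thesis by (rule ord_le_eq_trans)
next
  case False
  have "cmod (b s1 k) \<le> A" using A[of s1] s12 by simp
  hence "0 \<le> A" using norm_ge_zero[of "b s1 k"] by linarith
  moreover have "b s2 k = 0" "b s1 k = 0" using zero[of s1 k] zero[of s2 k] False s1 s12 by auto
  moreover have "0 \<le> Lamf M" by (simp add: Lamf_def)
  ultimately have "0 \<le> Lamf M * A * (s2 - s1)" "b s2 k - b s1 k = 0" using s12 by auto
  thus ?thesis by simp
qed

lemma boot:
  assumes t0: "0 \<le> t0" and h: "0 \<le> h" "h * Lamf M \<le> 1/2" and s: "s \<in> {t0..t0+h}"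
  shows "cmod (b s k) \<le> 2 * cmod (b t0 k)"
proof -
  have "continuous_on {t0..t0+h} (\<lambda>s. cmod (b s k))"
    using cont[OF t0] by (intro continuous_on_norm)
  moreover have "compact {t0..t0+h}" "{t0..t0+h} \<noteq> {}" using h by auto
  ultimately obtain x where x: "x \<in> {t0..t0+h}" and mx: "\<And>y. y \<in> {t0..t0+h} \<Longrightarrow> cmod (b y k) \<le> cmod (b x k)"
    using continuous_attains_sup[of "{t0..t0+h}" "\<lambda>s. cmod (b s k)"] by blast
  have xt: "t0 \<le> x" "x \<le> t0 + h" using x by auto
  have "cmod (b x k - b t0 k) \<le> Lamf M * cmod (b x k) * (x - t0)"
  proof (rule incr[OF t0 xt(1)])
    fix y assume "y \<in> {t0..x}"
    hence "y \<in> {t0..t0+h}" using xt by auto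
    thus "cmod (b y k) \<le> cmod (b x k)" by (rule mx)
  qed
  also have "\<dots> \<le> Lamf M * cmod (b x k) * h"
    using xt by (intro mult_left_mono) (auto simp: Lamf_def)
  also have "\<dots> = (h * Lamf M) * cmod (b x k)" by (simp only: ac_simps)
  also have "\<dots> \<le> 1/2 * cmod (b x k)" using h by (intro mult_right_mono) auto
  finally have 1: "cmod (b x k - b t0 k) \<le> 1/2 * cmod (b x k)" .
  have "cmod (b x k) \<le> cmod (b t0 k) + cmod (b x k - b t0 k)" by (rule norm_triangle_sub)
  hence "cmod (b x k) \<le> 2 * cmod (b t0 k)" using 1 by linarith
  thus ?thesis using mx[OF s] by linarith
qed

end



locale win = toy +
  fixes t0 h :: real
  assumes t0: "0 \<le> t0" and hpos: "0 < h" and hsmall: "h \<le> 1 / (2 * Bf M)"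
begin

definition A :: "nat \<Rightarrow> real" where "A k = 2 * cmod (b t0 k)"

lemma B1_ge: "1 \<le> B1f M" "Lamf M \<le> B1f M" unfolding B1f_def by auto
lemma B_ge: "B1f M \<le> Bf M" "2 * Lf M \<le> Bf M" "1 \<le> Bf M" unfolding Bf_def using B1_ge by auto
lemma L_nonneg: "0 \<le> Lf M" unfolding Lf_def Df_def using B1_ge by simp

lemma h_le: "h \<le> 1/2" "h * Lamf M \<le> 1/2" "h * Bf M \<le> 1/2"
proof -
  have hB: "h * Bf M \<le> 1/2" using hsmall B_ge(3) by (simp add: field_simps)
  show "h * Bf M \<le> 1/2" by (rule hB)
  have "h * 1 \<le> h * Bf M" using B_ge(3) hpos by (intro mult_left_mono) auto
  thus "h \<le> 1/2" using hB by simp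
  show "h * Lamf M \<le> 1/2" using hB B_ge B1_ge hpos by (smt (verit) mult_left_mono)
qed

lemma A_nonneg: "0 \<le> A k" unfolding A_def by simp
lemma A_le: "A k \<le> Df M" unfolding A_def Df_def using bound[OF t0] by simp

lemma w1: "s \<in> {t0..t0+h} \<Longrightarrow> cmod (b s k) \<le> A k"
  unfolding A_def by (rule boot[OF t0]) (use hpos h_le in auto)

lemma w2: assumes s: "s \<in> {t0..t0+h}" and s': "s' \<in> {t0..t0+h}"
  shows "cmod (b s k - b s' k) \<le> \<bar>s - s'\<bar> * B1f M * A k"
proof -
  have key: "cmod (b y k - b x k) \<le> (y - x) * B1f M * A k"
    if "x \<in> {t0..t0+h}" "y \<in> {t0..t0+h}" "x \<le> y" for x y
  proof -
    have "cmod (b y k - b x k) \<le> Lamf M * A k * (y - x)"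
    proof (rule incr)
      show "0 \<le> x" using that t0 by auto
      show "x \<le> y" by fact
      fix \<sigma> assume "\<sigma> \<in> {x..y}"
      hence "\<sigma> \<in> {t0..t0+h}" using that by auto
      thus "cmod (b \<sigma> k) \<le> A k" by (rule w1)
    qed
    also have "\<dots> \<le> B1f M * A k * (y - x)"
      using B1_ge A_nonneg that by (intro mult_right_mono) auto
    finally show ?thesis by (simp add: ac_simps)
  qed
  show ?thesis
  proof (cases "s' \<le> s")
    case True thus ?thesis using key[OF s' s] by simp
  next
    case False
    hence "cmod (b s' k - b s k) \<le> (s' - s) * B1f M * A k" using key[OF s s'] by simp
    thus ?thesis using False by (simp add: norm_minus_commute)
  qed
qed

lemma w3: assumes s: "s \<in> {t0..t0+h}" and s': "s' \<in> {t0..t0+h}"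
  shows "cmod (g s k - g s' k) \<le> Lf M * A k * \<bar>s - s'\<bar>"
proof -
  let ?\<tau> = "\<bar>s - s'\<bar>"
  have tau: "0 \<le> ?\<tau>" "?\<tau> \<le> 1" using s s' h_le by auto
  have "norm (fR (b s' (k-1) + (b s (k-1) - b s' (k-1))) (b s' k + (b s k - b s' k)) (b s' (k+1) + (b s (k+1) - b s' (k+1)))
        - fR (b s' (k-1)) (b s' k) (b s' (k+1))) \<le> 35 * B1f M^3 * Df M^2 * ?\<tau> * A k"
  proof (rule FR1)
    show "norm (b s' (k-1)) \<le> A (k-1)" "norm (b s' k) \<le> A k" "norm (b s' (k+1)) \<le> A (k+1)"
      using w1[OF s'] by auto
    show "norm (b s (k-1) - b s' (k-1)) \<le> ?\<tau> * B1f M * A (k-1)"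
      "norm (b s k - b s' k) \<le> ?\<tau> * B1f M * A k"
      "norm (b s (k+1) - b s' (k+1)) \<le> ?\<tau> * B1f M * A (k+1)"
      using w2[OF s s'] by auto
    show "A (k-1) \<le> Df M" "A k \<le> Df M" "A (k+1) \<le> Df M" using A_le by auto
  qed (use tau B1_ge in auto)
  hence "norm (fR (b s (k-1)) (b s k) (b s (k+1)) - fR (b s' (k-1)) (b s' k) (b s' (k+1)))
          \<le> Lf M * A k * ?\<tau>" by (simp add: Lf_def ac_simps)
  moreover have "g s k - g s' k = \<i> * (fR (b s (k-1)) (b s k) (b s (k+1)) - fR (b s' (k-1)) (b s' k) (b s' (k+1)))"
    unfolding g_def by (simp add: algebra_simps)
  ultimately show ?thesis by (simp add: norm_mult)
qed

definition tm :: real where "tm = t0 + h/2"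

lemma w4: assumes tau: "0 \<le> \<tau>" "\<tau> \<le> h/2"
  shows "cmod (b (tm+\<tau>) k + b (tm-\<tau>) k - 2 * b tm k) \<le> \<tau>^2 * Bf M * A k"
proof (cases "k \<in> {1..N}")
  case True
  have W: "{tm-\<tau>..tm+\<tau>} \<subseteq> {t0..t0+h}" using tau by (auto simp: tm_def)
  have d: "((\<lambda>s. b s k) has_vector_derivative g x k) (at x within S)" if "x \<in> S" "S \<subseteq> {t0..t0+h}" for x S
  proof -
    have "x \<ge> 0" using that t0 by auto
    moreover have "S \<subseteq> {0..}" using that t0 by auto
    ultimately show ?thesis using has_vector_derivative_within_subset deriv True by blast
  qed
  have "norm (b (tm+\<tau>) k - b tm k - (tm + \<tau> - tm) *\<^sub>R g tm k) \<le> norm (tm + \<tau> - tm) * (Lf M * A k * \<tau>)"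
  proof (rule vector_differentiable_bound_linearization[where S="{tm..tm+\<tau>}"])
    fix x assume x: "x \<in> {tm..tm+\<tau>}"
    show "((\<lambda>s. b s k) has_vector_derivative g x k) (at x within {tm..tm+\<tau>})"
      by (rule d) (use x W in auto)
    have "cmod (g x k - g tm k) \<le> Lf M * A k * \<bar>x - tm\<bar>"
      by (rule w3) (use x W tau in auto)
    also have "\<dots> \<le> Lf M * A k * \<tau>" using x L_nonneg A_nonneg by (intro mult_left_mono) auto
    finally show "cmod (g x k - g tm k) \<le> Lf M * A k * \<tau>" .
  qed (use tau in \<open>auto simp: closed_segment_eq_real_ivl\<close>)
  hence 1: "norm (b (tm+\<tau>) k - b tm k - \<tau> * g tm k) \<le> \<tau> * (Lf M * A k * \<tau>)"
    using tau by (simp add: scaleR_conv_of_real)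
  have "norm (b (tm-\<tau>) k - b tm k - (tm - \<tau> - tm) *\<^sub>R g tm k) \<le> norm (tm - \<tau> - tm) * (Lf M * A k * \<tau>)"
  proof (rule vector_differentiable_bound_linearization[where S="{tm-\<tau>..tm}"])
    fix x assume x: "x \<in> {tm-\<tau>..tm}"
    show "((\<lambda>s. b s k) has_vector_derivative g x k) (at x within {tm-\<tau>..tm})"
      by (rule d) (use x W in auto)
    have "cmod (g x k - g tm k) \<le> Lf M * A k * \<bar>x - tm\<bar>"
      by (rule w3) (use x W tau in auto)
    also have "\<dots> \<le> Lf M * A k * \<tau>" using x L_nonneg A_nonneg by (intro mult_left_mono) auto
    finally show "cmod (g x k - g tm k) \<le> Lf M * A k * \<tau>" .
  qed (use tau in \<open>auto simp: closed_segment_eq_real_ivl\<close>)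
  hence 2: "norm (b (tm-\<tau>) k - b tm k + \<tau> * g tm k) \<le> \<tau> * (Lf M * A k * \<tau>)"
    using tau by (simp add: scaleR_conv_of_real)
  have "b (tm+\<tau>) k + b (tm-\<tau>) k - 2 * b tm k = (b (tm+\<tau>) k - b tm k - \<tau> * g tm k) + (b (tm-\<tau>) k - b tm k + \<tau> * g tm k)"
    by (simp add: algebra_simps)
  hence "cmod (b (tm+\<tau>) k + b (tm-\<tau>) k - 2 * b tm k) \<le> cmod (b (tm+\<tau>) k - b tm k - \<tau> * g tm k) + cmod (b (tm-\<tau>) k - b tm k + \<tau> * g tm k)"
    by (metis norm_triangle_ineq)
  hence "cmod (b (tm+\<tau>) k + b (tm-\<tau>) k - 2 * b tm k) \<le> \<tau> * (Lf M * A k * \<tau>) + \<tau> * (Lf M * A k * \<tau>)"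
    using add_mono[OF 1 2] by (rule order_trans)
  also have "\<dots> = \<tau>^2 * (2 * Lf M) * A k" by (simp add: power2_eq_square)
  also have "\<dots> \<le> \<tau>^2 * Bf M * A k" using B_ge A_nonneg by (intro mult_right_mono mult_left_mono) auto
  finally show ?thesis .
next
  case False
  have "tm - \<tau> \<ge> 0" "tm \<ge> 0" "tm + \<tau> \<ge> 0" using tau t0 by (auto simp: tm_def)
  hence "b (tm+\<tau>) k = 0" "b (tm-\<tau>) k = 0" "b tm k = 0" using zero False by auto
  thus ?thesis using A_nonneg B_ge by simp
qed

end



lemma Fmid_eq: "F_Midpt N u v j = \<i> * fR (m_av N u v (j-1)) (m_av N u v j) (m_av N u v (j+1))"
  unfolding F_Midpt_def fR_def Let_def
  by (simp add: cmod_sq_complex' algebra_simps power2_eq_square)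

lemma a_av_eq: "a_av N u v j = (ext N u j * cnj (ext N u j) + ext N v j * cnj (ext N v j)) / 2"
  unfolding a_av_def by (simp add: cmod_sq_complex)

lemma Fmass_diff: "F_Mass N u v j - F_Midpt N u v j =
   - \<i> * ((ext N u j - ext N v j) * cnj (ext N u j - ext N v j) / 4) * m_av N u v j"
  unfolding F_Mass_def F_Midpt_def Let_def a_av_eq m_av_def
  by (simp add: cmod_sq_complex' algebra_simps power2_eq_square divide_simps)

lemma Feng_diff: "F_Eng N u v j - F_Mass N u v j =
   2 * \<i> * cnj (m_av N u v j) * ((ext N u (j+1) - ext N v (j+1))^2/4 + (ext N u (j-1) - ext N v (j-1))^2/4)"
  unfolding F_Mass_def F_Eng_def Let_def q_av_def m_av_def
  by (simp add: algebra_simps power2_eq_square divide_simps)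

context win begin

lemma w2B: assumes "s \<in> {t0..t0+h}" "s' \<in> {t0..t0+h}"
  shows "cmod (b s k - b s' k) \<le> \<bar>s - s'\<bar> * Bf M * A k"
proof -
  have "\<bar>s - s'\<bar> * B1f M * A k \<le> \<bar>s - s'\<bar> * Bf M * A k"
    using B_ge A_nonneg by (intro mult_right_mono mult_left_mono) auto
  thus ?thesis using w2[OF assms, of k] by linarith
qed

lemma tm_in: "0 \<le> x \<Longrightarrow> x \<le> h/2 \<Longrightarrow> tm + x \<in> {t0..t0+h} \<and> tm - x \<in> {t0..t0+h} \<and> tm \<in> {t0..t0+h}"
  using hpos by (auto simp: tm_def)

lemma phi_deriv_bound: assumes x: "0 \<le> x" "x \<le> h/2"
  shows "cmod (g (tm+x) j + g (tm-x) j - 2 * g tm j) \<le> 55 * Bf M^3 * Df M^2 * (h/2)^2 * A j"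
proof -
  have mem: "tm + x \<in> {t0..t0+h}" "tm - x \<in> {t0..t0+h}" "tm \<in> {t0..t0+h}" using tm_in[OF x] by auto
  have xle1: "x \<le> 1" using x h_le by auto
  have "norm (fR (b tm (j-1) + (b (tm+x) (j-1) - b tm (j-1))) (b tm j + (b (tm+x) j - b tm j)) (b tm (j+1) + (b (tm+x) (j+1) - b tm (j+1)))
      + fR (b tm (j-1) + (b (tm-x) (j-1) - b tm (j-1))) (b tm j + (b (tm-x) j - b tm j)) (b tm (j+1) + (b (tm-x) (j+1) - b tm (j+1)))
      - 2 * fR (b tm (j-1)) (b tm j) (b tm (j+1))) \<le> 55 * Bf M^3 * Df M^2 * x^2 * A j"
  proof (rule FR2)
    show "norm (b tm (j-1)) \<le> A (j-1)" "norm (b tm j) \<le> A j" "norm (b tm (j+1)) \<le> A (j+1)"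
      using w1[OF mem(3)] by auto
    show "norm (b (tm+x) (j-1) - b tm (j-1)) \<le> x * Bf M * A (j-1)"
      "norm (b (tm+x) j - b tm j) \<le> x * Bf M * A j"
      "norm (b (tm+x) (j+1) - b tm (j+1)) \<le> x * Bf M * A (j+1)"
      using w2B[OF mem(1) mem(3)] x by auto
    show "norm (b (tm-x) (j-1) - b tm (j-1)) \<le> x * Bf M * A (j-1)"
      "norm (b (tm-x) j - b tm j) \<le> x * Bf M * A j"
      "norm (b (tm-x) (j+1) - b tm (j+1)) \<le> x * Bf M * A (j+1)"
      using w2B[OF mem(2) mem(3)] x by auto
    have e: "\<And>k. b (tm + x) k - b tm k + (b (tm - x) k - b tm k) = b (tm+x) k + b (tm-x) k - 2 * b tm k"
      by simp
    show "norm (b (tm+x) (j-1) - b tm (j-1) + (b (tm-x) (j-1) - b tm (j-1))) \<le> x^2 * Bf M * A (j-1)"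
      "norm (b (tm+x) j - b tm j + (b (tm-x) j - b tm j)) \<le> x^2 * Bf M * A j"
      "norm (b (tm+x) (j+1) - b tm (j+1) + (b (tm-x) (j+1) - b tm (j+1))) \<le> x^2 * Bf M * A (j+1)"
      unfolding e using w4[OF x] by auto
    show "A (j-1) \<le> Df M" "A j \<le> Df M" "A (j+1) \<le> Df M" using A_le by auto
  qed (use x xle1 B_ge in auto)
  hence 1: "norm (fR (b (tm+x) (j-1)) (b (tm+x) j) (b (tm+x) (j+1)) + fR (b (tm-x) (j-1)) (b (tm-x) j) (b (tm-x) (j+1))
      - 2 * fR (b tm (j-1)) (b tm j) (b tm (j+1))) \<le> 55 * Bf M^3 * Df M^2 * x^2 * A j" by simp
  have "g (tm+x) j + g (tm-x) j - 2 * g tm j = \<i> * (fR (b (tm+x) (j-1)) (b (tm+x) j) (b (tm+x) (j+1)) + fR (b (tm-x) (j-1)) (b (tm-x) j) (b (tm-x) (j+1))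
      - 2 * fR (b tm (j-1)) (b tm j) (b tm (j+1)))" unfolding g_def by (simp add: algebra_simps)
  hence "cmod (g (tm+x) j + g (tm-x) j - 2 * g tm j) \<le> 55 * Bf M^3 * Df M^2 * x^2 * A j"
    using 1 by (simp add: norm_mult)
  also have "\<dots> \<le> 55 * Bf M^3 * Df M^2 * (h/2)^2 * A j"
    using x B_ge A_nonneg by (intro mult_right_mono mult_left_mono power_mono) auto
  finally show ?thesis .
qed


lemma partA: assumes j: "j \<in> {1..N}"
  shows "cmod (b (t0+h) j - b t0 j - h * g tm j) \<le> (h/2) * (55 * Bf M^3 * Df M^2 * (h/2)^2 * A j)"
proof -
  define \<phi> where "\<phi> x = b (tm+x) j - b (tm-x) j - 2 * of_real x * g tm j" for x
  define \<phi>' where "\<phi>' x = g (tm+x) j + g (tm-x) j - 2 * g tm j" for x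
  have d: "(\<phi> has_vector_derivative \<phi>' x) (at x within {0..h/2})" if x: "x \<in> {0..h/2}" for x
  proof -
    have x': "0 \<le> x" "x \<le> h/2" using x by auto
    have p0: "tm + x \<ge> 0" "tm - x \<ge> 0" using tm_in[OF x'] t0 by auto
    have im1: "(\<lambda>x. tm + x) ` {0..h/2} \<subseteq> {0..}" using t0 hpos by (auto simp: tm_def)
    have im2: "(\<lambda>x. tm - x) ` {0..h/2} \<subseteq> {0..}" using t0 hpos by (auto simp: tm_def)
    have f1: "((\<lambda>x. tm + x) has_vector_derivative 1) (at x within {0..h/2})"
      by (auto intro!: derivative_eq_intros simp: has_real_derivative_iff_has_vector_derivative[symmetric])
    have f2: "((\<lambda>x. tm - x) has_vector_derivative -1) (at x within {0..h/2})"
      by (auto intro!: derivative_eq_intros simp: has_real_derivative_iff_has_vector_derivative[symmetric])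
    have D1: "((\<lambda>s. b s j) has_vector_derivative g (tm+x) j) (at (tm+x) within (\<lambda>x. tm + x) ` {0..h/2})"
      by (rule has_vector_derivative_within_subset[OF deriv[OF p0(1) j] im1])
    have D2: "((\<lambda>s. b s j) has_vector_derivative g (tm-x) j) (at (tm-x) within (\<lambda>x. tm - x) ` {0..h/2})"
      by (rule has_vector_derivative_within_subset[OF deriv[OF p0(2) j] im2])
    have c1: "((\<lambda>x. b (tm+x) j) has_vector_derivative g (tm+x) j) (at x within {0..h/2})"
      using vector_diff_chain_within[OF f1 D1] by (simp add: o_def)
    have c2: "((\<lambda>x. b (tm-x) j) has_vector_derivative - g (tm-x) j) (at x within {0..h/2})"
      using vector_diff_chain_within[OF f2 D2] by (simp add: o_def)
    have c3: "((\<lambda>x. 2 * of_real x * g tm j) has_vector_derivative 2 * g tm j) (at x within {0..h/2})"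
      by (auto intro!: derivative_eq_intros)
    show ?thesis unfolding \<phi>_def \<phi>'_def
      using has_vector_derivative_diff[OF has_vector_derivative_diff[OF c1 c2] c3] by simp
  qed
  have "norm (\<phi> (h/2) - \<phi> 0 - (h/2 - 0) *\<^sub>R \<phi>' 0) \<le> norm (h/2 - 0) * (55 * Bf M^3 * Df M^2 * (h/2)^2 * A j)"
  proof (rule vector_differentiable_bound_linearization[where S="{0..h/2}", OF d])
    fix x assume "x \<in> {0..h/2}"
    thus "norm (\<phi>' x - \<phi>' 0) \<le> 55 * Bf M^3 * Df M^2 * (h/2)^2 * A j"
      using phi_deriv_bound[of x j] by (simp add: \<phi>'_def)
  qed (use hpos in \<open>auto simp: closed_segment_eq_real_ivl\<close>)
  moreover have "\<phi> (h/2) = b (t0+h) j - b t0 j - h * g tm j" unfolding \<phi>_def tm_def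
    by (simp add: algebra_simps)
  moreover have "\<phi> 0 = 0" "\<phi>' 0 = 0" unfolding \<phi>_def \<phi>'_def by simp_all
  ultimately show ?thesis using hpos by simp
qed


definition mid :: "nat \<Rightarrow> complex" where "mid k = (b t0 k + b (t0+h) k)/2"

lemma mav: "m_av N (b t0) (b (t0+h)) = mid"
  using ext_eq[OF t0] ext_eq[of "t0+h"] t0 hpos by (auto simp: m_av_def mid_def fun_eq_iff)

lemma partB:
  shows "cmod (g tm j - \<i> * fR (mid (j-1)) (mid j) (mid (j+1))) \<le> 35 * Bf M^3 * Df M^2 * h^2 * A j"
proof -
  define E where "E k = (b (tm+h/2) k + b (tm-h/2) k - 2 * b tm k)/2" for k
  have midE: "mid k = b tm k + E k" for k
  proof -
    have "tm + h/2 = t0 + h" "tm - h/2 = t0" unfolding tm_def by simp_all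
    moreover have "\<And>x y z :: complex. (x + y)/2 = z + (y + x - 2*z)/2" by (simp add: field_simps)
    ultimately show ?thesis unfolding mid_def E_def by metis
  qed
  have Eb: "norm (E k) \<le> h^2 * Bf M * A k" for k
  proof -
    have "norm (E k) = cmod (b (tm+h/2) k + b (tm-h/2) k - 2 * b tm k) / 2" unfolding E_def by simp
    also have "\<dots> \<le> (h/2)^2 * Bf M * A k / 2" using w4[of "h/2" k] hpos by (intro divide_right_mono) auto
    also have "\<dots> \<le> h^2 * Bf M * A k" using hpos B_ge A_nonneg
      by (simp add: power2_eq_square mult_nonneg_nonneg)
    finally show ?thesis .
  qed
  have mem: "tm \<in> {t0..t0+h}" using tm_in[of 0] hpos by auto
  have h2: "0 \<le> h^2" "h^2 \<le> 1" using hpos h_le by (auto simp: power_le_one)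
  have "norm (fR (b tm (j-1) + E (j-1)) (b tm j + E j) (b tm (j+1) + E (j+1)) - fR (b tm (j-1)) (b tm j) (b tm (j+1)))
     \<le> 35 * Bf M^3 * Df M^2 * h^2 * A j"
  proof (rule FR1)
    show "norm (b tm (j-1)) \<le> A (j-1)" "norm (b tm j) \<le> A j" "norm (b tm (j+1)) \<le> A (j+1)"
      using w1[OF mem] by auto
    show "norm (E (j-1)) \<le> h^2 * Bf M * A (j-1)" "norm (E j) \<le> h^2 * Bf M * A j" "norm (E (j+1)) \<le> h^2 * Bf M * A (j+1)"
      using Eb by auto
    show "A (j-1) \<le> Df M" "A j \<le> Df M" "A (j+1) \<le> Df M" using A_le by auto
  qed (use h2 B_ge in auto)
  moreover have "g tm j - \<i> * fR (mid (j-1)) (mid j) (mid (j+1)) =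
     - \<i> * (fR (b tm (j-1) + E (j-1)) (b tm j + E j) (b tm (j+1) + E (j+1)) - fR (b tm (j-1)) (b tm j) (b tm (j+1)))"
    unfolding g_def midE by (simp add: algebra_simps)
  ultimately show ?thesis by (simp add: norm_mult)
qed

lemma errmid: assumes j: "j \<in> {1..N}"
  shows "cmod (b (t0+h) j - b t0 j - h * F_Midpt N (b t0) (b (t0+h)) j) \<le> 42 * Bf M^3 * Df M^2 * h^3 * A j"
proof -
  have F: "F_Midpt N (b t0) (b (t0+h)) j = \<i> * fR (mid (j-1)) (mid j) (mid (j+1))"
    unfolding Fmid_eq mav ..
  have e: "b (t0+h) j - b t0 j - h * F_Midpt N (b t0) (b (t0+h)) j =
     (b (t0+h) j - b t0 j - h * g tm j) + h * (g tm j - \<i> * fR (mid (j-1)) (mid j) (mid (j+1)))"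
    unfolding F by (simp add: algebra_simps)
  have 2: "cmod (h * (g tm j - \<i> * fR (mid (j-1)) (mid j) (mid (j+1)))) \<le> h * (35 * Bf M^3 * Df M^2 * h^2 * A j)"
    using partB[of j] hpos by (simp add: norm_mult mult_left_mono)
  have "cmod (b (t0+h) j - b t0 j - h * F_Midpt N (b t0) (b (t0+h)) j)
     \<le> cmod (b (t0+h) j - b t0 j - h * g tm j) + cmod (h * (g tm j - \<i> * fR (mid (j-1)) (mid j) (mid (j+1))))"
    unfolding e by (rule norm_triangle_ineq)
  also have "\<dots> \<le> (h/2) * (55 * Bf M^3 * Df M^2 * (h/2)^2 * A j) + h * (35 * Bf M^3 * Df M^2 * h^2 * A j)"
    by (rule add_mono[OF partA[OF j] 2])
  also have "\<dots> = (55/8 + 35) * (Bf M^3 * Df M^2 * h^3 * A j)"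
    by (simp add: power2_eq_square power3_eq_cube algebra_simps)
  also have "\<dots> \<le> 42 * (Bf M^3 * Df M^2 * h^3 * A j)"
    using B_ge A_nonneg hpos by (intro mult_right_mono) (auto intro!: mult_nonneg_nonneg)
  finally show ?thesis by (simp add: ac_simps)
qed


lemma diff_b: "cmod (b t0 k - b (t0+h) k) \<le> h * Bf M * A k"
  using w2B[of t0 "t0+h" k] hpos by auto

lemma diff_sq: "(cmod (b t0 k - b (t0+h) k))^2 \<le> h^2 * Bf M^2 * Df M^2"
proof -
  have "cmod (b t0 k - b (t0+h) k) \<le> h * Bf M * Df M"
    using diff_b[of k] A_le[of k] hpos B_ge
    by (meson order_trans mult_left_mono mult_nonneg_nonneg less_imp_le zero_le_one)
  hence "(cmod (b t0 k - b (t0+h) k))^2 \<le> (h * Bf M * Df M)^2" by (intro power_mono) auto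
  thus ?thesis by (simp add: power_mult_distrib)
qed

lemma mid_le: "cmod (mid j) \<le> A j"
proof -
  have "cmod (mid j) \<le> (cmod (b t0 j) + cmod (b (t0+h) j)) / 2"
    unfolding mid_def by (simp add: norm_triangle_ineq divide_right_mono)
  also have "\<dots> \<le> (A j + A j)/2" using w1[of t0 j] w1[of "t0+h" j] hpos t0
    by (intro divide_right_mono add_mono) auto
  finally show ?thesis by simp
qed

lemma Fextra: assumes F: "F \<in> {F_Midpt, F_Mass, F_Eng}"
  shows "cmod (F N (b t0) (b (t0+h)) j - F_Midpt N (b t0) (b (t0+h)) j) \<le> 2 * Bf M^2 * Df M^2 * h^2 * A j"
proof -
  let ?u = "b t0" and ?v = "b (t0+h)"
  have eu: "ext N ?u = ?u" "ext N ?v = ?v" using ext_eq t0 hpos by auto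
  let ?K = "h^2 * Bf M^2 * Df M^2"
  have K0: "0 \<le> ?K" by simp
  have MB: "cmod (F_Mass N ?u ?v j - F_Midpt N ?u ?v j) \<le> ?K * A j"
  proof -
    have "cmod (F_Mass N ?u ?v j - F_Midpt N ?u ?v j) = (cmod (?u j - ?v j))^2 / 4 * cmod (mid j)"
    proof -
      have c: "cmod (cnj (b t0 j) - cnj (b (t0 + h) j)) = cmod (b t0 j - b (t0 + h) j)"
        by (metis complex_cnj_diff complex_mod_cnj)
      show ?thesis unfolding Fmass_diff eu mav by (simp add: norm_mult norm_divide power2_eq_square c)
    qed
    also have "\<dots> \<le> ?K / 4 * A j"
      using diff_sq[of j] mid_le[of j] K0 by (intro mult_mono divide_right_mono) auto
    also have "\<dots> \<le> ?K * A j" using K0 A_nonneg by (simp add: mult_right_mono)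
    finally show ?thesis .
  qed
  have EB: "cmod (F_Eng N ?u ?v j - F_Mass N ?u ?v j) \<le> ?K * A j"
  proof -
    have "cmod (F_Eng N ?u ?v j - F_Mass N ?u ?v j) \<le> 2 * cmod (mid j) *
       ((cmod (?u (j+1) - ?v (j+1)))^2/4 + (cmod (?u (j-1) - ?v (j-1)))^2/4)"
    proof -
      have "cmod ((?u (j+1) - ?v (j+1))^2/4 + (?u (j-1) - ?v (j-1))^2/4) \<le>
            (cmod (?u (j+1) - ?v (j+1)))^2/4 + (cmod (?u (j-1) - ?v (j-1)))^2/4"
        by (rule order_trans[OF norm_triangle_ineq]) (simp add: norm_divide norm_power)
      thus ?thesis unfolding Feng_diff eu mav by (simp add: norm_mult mult_left_mono)
    qed
    also have "\<dots> \<le> 2 * A j * (?K/4 + ?K/4)"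
      using diff_sq[of "j+1"] diff_sq[of "j-1"] mid_le[of j] A_nonneg K0
      by (intro mult_mono add_mono divide_right_mono) auto
    also have "\<dots> = ?K * A j" by simp
    finally show ?thesis .
  qed
  have "cmod (F_Eng N ?u ?v j - F_Midpt N ?u ?v j) \<le> cmod (F_Eng N ?u ?v j - F_Mass N ?u ?v j) + cmod (F_Mass N ?u ?v j - F_Midpt N ?u ?v j)"
    by (rule order_trans[OF _ norm_triangle_ineq]) simp
  hence EB2: "cmod (F_Eng N ?u ?v j - F_Midpt N ?u ?v j) \<le> 2 * (?K * A j)" using EB MB by linarith
  have r: "2 * Bf M^2 * Df M^2 * h^2 * A j = 2 * (?K * A j)" by (simp add: ac_simps)
  have X0: "0 \<le> ?K * A j" using K0 A_nonneg by simp
  show ?thesis unfolding r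
  proof -
    consider "F = F_Midpt" | "F = F_Mass" | "F = F_Eng" using F by blast
    thus "cmod (F N ?u ?v j - F_Midpt N ?u ?v j) \<le> 2 * (?K * A j)"
    proof cases
      case 1 thus ?thesis using X0 by simp
    next
      case 2 thus ?thesis using MB X0 by simp
    next
      case 3 thus ?thesis using EB2 by simp
    qed
  qed
qed

end



lemma vnorm_L2: "vnorm N w = L2_set (\<lambda>j. cmod (w j)) {1..N}"
  unfolding vnorm_def L2_set_def ..

lemma Fbound:
  fixes F :: "nat \<Rightarrow> (nat \<Rightarrow> complex) \<Rightarrow> (nat \<Rightarrow> complex) \<Rightarrow> nat \<Rightarrow> complex"
  assumes F: "F \<in> {F_Midpt, F_Mass, F_Eng}" and u: "\<And>k. cmod (ext N u k) \<le> m"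
    and v: "\<And>k. cmod (ext N v k) \<le> m"
  shows "cmod (F N u v j) \<le> 5 * m^2 * cmod (m_av N u v j)"
proof -
  have m0: "0 \<le> m" using u[of 0] norm_ge_zero[of "ext N u 0"] by linarith
  have mm: "cmod (m_av N u v k) \<le> m" for k
  proof -
    have "cmod (m_av N u v k) \<le> (cmod (ext N u k) + cmod (ext N v k)) / 2"
      unfolding m_av_def by (simp add: norm_triangle_ineq divide_right_mono)
    also have "\<dots> \<le> (m + m)/2" using u v by (intro divide_right_mono add_mono) auto
    finally show ?thesis by simp
  qed
  have sq: "cmod x \<le> m \<Longrightarrow> (cmod x)^2 \<le> m^2" for x by (intro power_mono) auto
  have aa: "cmod (a_av N u v j) \<le> m^2"
  proof -
    have "cmod (a_av N u v j) = \<bar>((cmod (ext N u j))\<^sup>2 + (cmod (ext N v j))\<^sup>2) / 2\<bar>"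
      unfolding a_av_def by (rule norm_of_real)
    also have "\<dots> = ((cmod (ext N u j))\<^sup>2 + (cmod (ext N v j))\<^sup>2) / 2" by simp
    also have "\<dots> \<le> (m^2 + m^2)/2" using sq[OF u[of j]] sq[OF v[of j]] by (intro divide_right_mono add_mono) auto
    finally show ?thesis by simp
  qed
  have qq: "cmod (q_av N u v k) \<le> m^2" for k
  proof -
    have "cmod (q_av N u v k) \<le> (cmod ((ext N u k)^2) + cmod ((ext N v k)^2)) / 2"
      unfolding q_av_def by (simp add: norm_triangle_ineq divide_right_mono)
    also have "\<dots> \<le> (m^2 + m^2)/2" using sq[OF u[of k]] sq[OF v[of k]]
      by (intro divide_right_mono add_mono) (auto simp: norm_power)
    finally show ?thesis by simp
  qed
  let ?m = "m_av N u v"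
  have gen: "cmod (- \<i> * a * ?m j + 2 * \<i> * cnj (?m j) * (P + Q)) \<le> 5 * m^2 * cmod (?m j)"
    if a: "cmod a \<le> m^2" and P: "cmod P \<le> m^2" and Q: "cmod Q \<le> m^2" for a P Q
  proof -
    have "cmod (- \<i> * a * ?m j + 2 * \<i> * cnj (?m j) * (P + Q)) \<le> cmod (- \<i> * a * ?m j) + cmod (2 * \<i> * cnj (?m j) * (P + Q))"
      by (rule norm_triangle_ineq)
    also have "\<dots> = cmod a * cmod (?m j) + 2 * cmod (?m j) * cmod (P + Q)" by (simp add: norm_mult)
    also have "\<dots> \<le> m^2 * cmod (?m j) + 2 * cmod (?m j) * (m^2 + m^2)"
      using a P Q norm_triangle_ineq[of P Q]
      by (intro add_mono mult_right_mono mult_left_mono) auto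
    also have "\<dots> = 5 * m^2 * cmod (?m j)" by (simp add: algebra_simps)
    finally show ?thesis .
  qed
  consider "F = F_Midpt" | "F = F_Mass" | "F = F_Eng" using F by blast
  thus ?thesis
  proof cases
    case 1
    have "cmod (fR (?m (j-1)) (?m j) (?m (j+1))) \<le> 5 * m^2 * cmod (?m j)"
      by (rule fR_bound) (use mm in auto)
    thus ?thesis using 1 by (simp add: Fmid_eq norm_mult)
  next
    case 2
    have "cmod ((?m (j+1))^2) \<le> m^2" "cmod ((?m (j-1))^2) \<le> m^2"
      using sq[OF mm] by (auto simp: norm_power)
    thus ?thesis using 2 gen[OF aa] unfolding F_Mass_def Let_def by simp
  next
    case 3
    thus ?thesis using gen[OF aa qq qq] unfolding F_Eng_def Let_def by simp
  qed
qed

context toy begin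

lemma vn: "0 \<le> s \<Longrightarrow> L2_set (\<lambda>j. cmod (b s j)) {1..N} = M"
  unfolding L2_set_def using mass M_nonneg by simp

lemma large:
  fixes F :: "nat \<Rightarrow> (nat \<Rightarrow> complex) \<Rightarrow> (nat \<Rightarrow> complex) \<Rightarrow> nat \<Rightarrow> complex"
  assumes F: "F \<in> {F_Midpt, F_Mass, F_Eng}" and t0: "0 \<le> t0" and h: "0 < h"
  shows "vnorm N (\<lambda>j. b (t0+h) j - b t0 j - complex_of_real h * F N (b t0) (b (t0+h)) j)
        \<le> (1 + 5 * M^2 * h) * (2 * M)"
proof -
  let ?c = "1 + 5 * M^2 * h"
  have c0: "0 \<le> ?c" using h by simp
  have eu: "ext N (b t0) = b t0" "ext N (b (t0+h)) = b (t0+h)" using ext_eq t0 h by auto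
  have comp: "cmod (b (t0+h) j - b t0 j - complex_of_real h * F N (b t0) (b (t0+h)) j)
      \<le> ?c * (cmod (b t0 j) + cmod (b (t0+h) j))" for j
  proof -
    have Fb: "cmod (F N (b t0) (b (t0+h)) j) \<le> 5 * M^2 * cmod (m_av N (b t0) (b (t0+h)) j)"
      by (rule Fbound[OF F]) (use bound t0 h in \<open>auto simp: eu\<close>)
    have "cmod (m_av N (b t0) (b (t0+h)) j) \<le> (cmod (b t0 j) + cmod (b (t0+h) j)) / 2"
      unfolding m_av_def eu by (simp add: norm_triangle_ineq divide_right_mono)
    also have "\<dots> \<le> cmod (b t0 j) + cmod (b (t0+h) j)" by simp
    finally have "cmod (F N (b t0) (b (t0+h)) j) \<le> 5 * M^2 * (cmod (b t0 j) + cmod (b (t0+h) j))"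
      using Fb by (meson order_trans mult_left_mono zero_le_power2 mult_nonneg_nonneg zero_le_numeral)
    hence hF: "cmod (complex_of_real h * F N (b t0) (b (t0+h)) j) \<le> h * (5 * M^2 * (cmod (b t0 j) + cmod (b (t0+h) j)))"
      using h by (simp add: norm_mult mult_left_mono)
    have "cmod (b (t0+h) j - b t0 j - complex_of_real h * F N (b t0) (b (t0+h)) j)
       \<le> cmod (b (t0+h) j - b t0 j) + cmod (complex_of_real h * F N (b t0) (b (t0+h)) j)"
      by (rule norm_triangle_ineq4)
    also have "\<dots> \<le> (cmod (b t0 j) + cmod (b (t0+h) j)) + h * (5 * M^2 * (cmod (b t0 j) + cmod (b (t0+h) j)))"
      by (intro add_mono hF) (metis add.commute norm_triangle_ineq4)
    also have "\<dots> = ?c * (cmod (b t0 j) + cmod (b (t0+h) j))" by (simp add: algebra_simps)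
    finally show ?thesis .
  qed
  have "vnorm N (\<lambda>j. b (t0+h) j - b t0 j - complex_of_real h * F N (b t0) (b (t0+h)) j)
      \<le> L2_set (\<lambda>j. ?c * (cmod (b t0 j) + cmod (b (t0+h) j))) {1..N}"
    unfolding vnorm_L2 by (rule L2_set_mono) (use comp in auto)
  also have "\<dots> = ?c * L2_set (\<lambda>j. cmod (b t0 j) + cmod (b (t0+h) j)) {1..N}"
    using c0 by (simp add: L2_set_right_distrib)
  also have "\<dots> \<le> ?c * (L2_set (\<lambda>j. cmod (b t0 j)) {1..N} + L2_set (\<lambda>j. cmod (b (t0+h) j)) {1..N})"
    using c0 by (intro mult_left_mono L2_set_triangle_ineq) auto
  also have "\<dots> = ?c * (2 * M)" using vn[OF t0] vn[of "t0+h"] t0 h by simp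
  finally show ?thesis .
qed

end

context win begin

lemma errF: fixes F :: "nat \<Rightarrow> (nat \<Rightarrow> complex) \<Rightarrow> (nat \<Rightarrow> complex) \<Rightarrow> nat \<Rightarrow> complex"
  assumes j: "j \<in> {1..N}" and F: "F \<in> {F_Midpt, F_Mass, F_Eng}"
  shows "cmod (b (t0+h) j - b t0 j - h * F N (b t0) (b (t0+h)) j) \<le> 44 * Bf M^3 * Df M^2 * h^3 * A j"
proof -
  let ?u = "b t0" and ?v = "b (t0+h)"
  have e: "b (t0+h) j - b t0 j - h * F N ?u ?v j = (b (t0+h) j - b t0 j - h * F_Midpt N ?u ?v j) - h * (F N ?u ?v j - F_Midpt N ?u ?v j)"
    by (simp add: algebra_simps)
  have 2: "cmod (h * (F N ?u ?v j - F_Midpt N ?u ?v j)) \<le> h * (2 * Bf M^2 * Df M^2 * h^2 * A j)"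
    using Fextra[OF F, of j] hpos by (simp add: norm_mult mult_left_mono)
  have "cmod (b (t0+h) j - b t0 j - h * F N ?u ?v j) \<le> cmod (b (t0+h) j - b t0 j - h * F_Midpt N ?u ?v j) + cmod (h * (F N ?u ?v j - F_Midpt N ?u ?v j))"
    unfolding e by (rule norm_triangle_ineq4)
  also have "\<dots> \<le> 42 * Bf M^3 * Df M^2 * h^3 * A j + h * (2 * Bf M^2 * Df M^2 * h^2 * A j)"
    by (rule add_mono[OF errmid[OF j] 2])
  also have "\<dots> = (42 * Bf M^3 + 2 * Bf M^2) * (Df M^2 * h^3 * A j)"
    by (simp add: power2_eq_square power3_eq_cube algebra_simps)
  also have "\<dots> \<le> (44 * Bf M^3) * (Df M^2 * h^3 * A j)"
  proof (rule mult_right_mono)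
    have "Bf M^2 \<le> Bf M^3" using B_ge by (simp add: power2_eq_square power3_eq_cube)
    thus "42 * Bf M^3 + 2 * Bf M^2 \<le> 44 * Bf M^3" by simp
  qed (use hpos A_nonneg in simp)
  finally show ?thesis by (simp add: ac_simps)
qed

lemma small: fixes F :: "nat \<Rightarrow> (nat \<Rightarrow> complex) \<Rightarrow> (nat \<Rightarrow> complex) \<Rightarrow> nat \<Rightarrow> complex"
  assumes F: "F \<in> {F_Midpt, F_Mass, F_Eng}"
  shows "vnorm N (\<lambda>j. b (t0+h) j - b t0 j - complex_of_real h * F N (b t0) (b (t0+h)) j)
        \<le> 88 * Bf M^3 * Df M^2 * h^3 * M"
proof -
  let ?K = "44 * Bf M^3 * Df M^2 * h^3"
  have "0 \<le> Bf M" using B_ge by linarith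
  hence K0: "0 \<le> ?K" using hpos by simp
  have "vnorm N (\<lambda>j. b (t0+h) j - b t0 j - complex_of_real h * F N (b t0) (b (t0+h)) j)
     \<le> L2_set (\<lambda>j. ?K * A j) {1..N}"
    unfolding vnorm_L2 by (rule L2_set_mono) (use errF[OF _ F] in auto)
  also have "\<dots> = ?K * L2_set A {1..N}" using K0 by (simp add: L2_set_right_distrib)
  also have "L2_set A {1..N} = 2 * M"
  proof -
    have "L2_set A {1..N} = 2 * L2_set (\<lambda>j. cmod (b t0 j)) {1..N}"
      unfolding A_def by (simp add: L2_set_right_distrib)
    also have "L2_set (\<lambda>j. cmod (b t0 j)) {1..N} = sqrt (M^2)"
      unfolding L2_set_def using mass[OF t0] by simp
    finally show ?thesis using M_nonneg by simp
  qed
  finally show ?thesis by (simp add: ac_simps)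
qed

end

lemma Cf_ge: assumes "0 \<le> m"
  shows "88 * Bf m^3 * Df m^2 * m \<le> Cf m" "16 * m * Bf m^3 + 40 * m^3 * Bf m^2 \<le> Cf m"
proof -
  have B0: "0 \<le> Bf m" unfolding Bf_def B1f_def by auto
  have "0 \<le> 88 * Bf m^3 * Df m^2 * m" "0 \<le> 16 * m * Bf m^3 + 40 * m^3 * Bf m^2"
    using assms B0 by simp_all
  thus "88 * Bf m^3 * Df m^2 * m \<le> Cf m" "16 * m * Bf m^3 + 40 * m^3 * Bf m^2 \<le> Cf m"
    unfolding Cf_def by linarith+
qed

theorem lemma3p5:
  fixes F :: "nat \<Rightarrow> (nat \<Rightarrow> complex) \<Rightarrow> (nat \<Rightarrow> complex) \<Rightarrow> nat \<Rightarrow> complex"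
  assumes "F \<in> {F_Midpt, F_Mass, F_Eng}"
  shows "\<exists>C :: real \<Rightarrow> real. \<forall>N \<ge> 1. \<forall>b. is_toy_solution N b \<longrightarrow>
           (\<forall>dt > 0. \<forall>n :: nat.
              vnorm N (\<lambda>j. b (real (Suc n) * dt) j - b (real n * dt) j
                 - complex_of_real dt * F N (b (real n * dt)) (b (real (Suc n) * dt)) j)
              \<le> C (vnorm N (b 0)) * dt ^ 3)"
proof (intro exI[of _ Cf] allI impI)
  fix N :: nat and b :: "real \<Rightarrow> nat \<Rightarrow> complex" and dt :: real and n :: nat
  assume sol: "is_toy_solution N b" and dt: "0 < dt"
  interpret toy N b by unfold_locales (rule sol)
  define t0 where "t0 = real n * dt"
  have t0: "0 \<le> t0" unfolding t0_def using dt by simp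
  have t1: "real (Suc n) * dt = t0 + dt" unfolding t0_def by (simp add: algebra_simps)
  have MM: "vnorm N (b 0) = M" unfolding M_def ..
  let ?E = "vnorm N (\<lambda>j. b (t0+dt) j - b t0 j - complex_of_real dt * F N (b t0) (b (t0+dt)) j)"
  have "?E \<le> Cf M * dt^3"
  proof (cases "dt \<le> 1 / (2 * Bf M)")
    case True
    interpret win N b t0 dt by unfold_locales (use t0 dt True in auto)
    have "?E \<le> 88 * Bf M^3 * Df M^2 * dt^3 * M" by (rule small[OF assms])
    also have "\<dots> = (88 * Bf M^3 * Df M^2 * M) * dt^3" by (simp add: ac_simps)
    also have "\<dots> \<le> Cf M * dt^3" using Cf_ge(1)[OF M_nonneg] dt by (intro mult_right_mono) auto
    finally show ?thesis .
  next
    case False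
    have B1: "1 \<le> Bf M" unfolding Bf_def B1f_def by auto
    have x1: "1 \<le> 2 * Bf M * dt" using False B1 by (simp add: field_simps)
    have c1: "1 \<le> (2 * Bf M * dt)^3" using x1 by (simp add: one_le_power)
    have c2: "dt * 1 \<le> dt * (2 * Bf M * dt)^2" using x1 dt by (intro mult_left_mono) (auto simp: one_le_power)
    have "?E \<le> (1 + 5 * M^2 * dt) * (2 * M)" by (rule large[OF assms t0 dt])
    also have "\<dots> = 2 * M * 1 + 10 * M^3 * (dt * 1)" by (simp add: algebra_simps power2_eq_square power3_eq_cube)
    also have "\<dots> \<le> 2 * M * (2 * Bf M * dt)^3 + 10 * M^3 * (dt * (2 * Bf M * dt)^2)"
      using M_nonneg by (intro add_mono mult_left_mono[OF c1] mult_left_mono[OF c2]) auto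
    also have "\<dots> = (16 * M * Bf M^3 + 40 * M^3 * Bf M^2) * dt^3"
      by (simp add: algebra_simps power2_eq_square power3_eq_cube)
    also have "\<dots> \<le> Cf M * dt^3" using Cf_ge(2)[OF M_nonneg] dt by (intro mult_right_mono) auto
    finally show ?thesis .
  qed
  thus "vnorm N (\<lambda>j. b (real (Suc n) * dt) j - b (real n * dt) j
                 - complex_of_real dt * F N (b (real n * dt)) (b (real (Suc n) * dt)) j)
              \<le> Cf (vnorm N (b 0)) * dt ^ 3"
    unfolding t1 MM t0_def[symmetric] .
qed


end
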